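(* For any $U\in(0,1]$, let $L=\sqrt{\frac{C}{C/U^2+(g(U)-1)/\epsilon^2}}$. Then $L\le\min\{\lambda^*,U\}$.
   Context: $\epsilon\in(0,1)$, $K\ge1$, $C>K$, $g:[0,1]\to[1,K]$ non-decreasing, $f(\lambda)=\frac{C}{\lambda^2}+\frac{g(\lambda)}{\epsilon^2}$, and $\lambda^*\in(0,1]$ a minimizer of $f$ over $[0,1]$. *)

theory Defs
  imports Complex_Main
begin

definition fobj :: "real \<Rightarrow> real \<Rightarrow> (real \<Rightarrow> real) \<Rightarrow> real \<Rightarrow> real" where
  "fobj C eps g lam = C / lam\<^sup>2 + g lam / eps\<^sup>2"

end

theory Submission
  imports Defs
begin

theorem lemmaB4:
  fixes eps K C lstar U :: real and g :: "real \<Rightarrow> real"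
  assumes eps: "0 < eps" "eps < 1"
    and K: "1 \<le> K"
    and CK: "C > K"
    and g_range: "\<forall>x\<in>{0..1}. 1 \<le> g x \<and> g x \<le> K"
    and g_mono: "mono_on {0..1} g"
    and lstar: "lstar \<in> {0<..1}"
    and lstar_min: "\<forall>lam\<in>{0<..1}. fobj C eps g lstar \<le> fobj C eps g lam"
    and U: "U \<in> {0<..1}"
  shows "sqrt (C / (C / U\<^sup>2 + (g U - 1) / eps\<^sup>2)) \<le> min lstar U"
proof -
  define D where "D = C / U\<^sup>2 + (g U - 1) / eps\<^sup>2"
  have C0: "C > 0" using CK K by linarith
  have U0: "U > 0" "U \<le> 1" using U by auto
  have l0: "lstar > 0" "lstar \<le> 1" using lstar by auto
  have gU: "g U \<ge> 1" using g_range U0 by auto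
  have gl: "g lstar \<ge> 1" using g_range l0 by auto
  have e2: "eps\<^sup>2 > 0" using eps by simp
  have t1: "(g U - 1) / eps\<^sup>2 \<ge> 0" using gU e2 by simp
  have cu: "C / U\<^sup>2 > 0" using C0 U0 by simp
  have Dge: "D \<ge> C / U\<^sup>2" unfolding D_def using t1 by linarith
  have Dpos: "D > 0" using Dge cu by linarith
  have "0 < D * (C / U\<^sup>2)" using Dpos cu by (rule mult_pos_pos)
  hence "C / D \<le> C / (C / U\<^sup>2)" using C0 Dge by (intro divide_left_mono) auto
  also have "\<dots> = U\<^sup>2" using C0 U0 by simp
  finally have hU: "C / D \<le> U\<^sup>2" .
  have sU: "sqrt (C / D) \<le> U" using hU U0 by (metis abs_of_pos real_sqrt_abs real_sqrt_le_mono)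
  show ?thesis
  proof (cases "U \<le> lstar")
    case True then show ?thesis using sU unfolding D_def by simp
  next
    case False
    have "fobj C eps g lstar \<le> fobj C eps g U" using lstar_min U by auto
    hence f: "C / lstar\<^sup>2 + g lstar / eps\<^sup>2 \<le> C / U\<^sup>2 + g U / eps\<^sup>2" unfolding fobj_def .
    have "g lstar / eps\<^sup>2 \<ge> 1 / eps\<^sup>2" using gl e2 by (simp add: divide_right_mono)
    moreover have "(g U - 1) / eps\<^sup>2 = g U / eps\<^sup>2 - 1 / eps\<^sup>2" by (simp add: diff_divide_distrib)
    ultimately have "C / lstar\<^sup>2 \<le> D" using f unfolding D_def by linarith
    hence "C / D \<le> lstar\<^sup>2" using Dpos C0 l0 by (simp add: field_simps)
    hence "sqrt (C / D) \<le> lstar" using l0 by (metis abs_of_pos real_sqrt_abs real_sqrt_le_mono)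
    then show ?thesis using sU unfolding D_def by simp
  qed
qed

end
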